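(* Let $f$ and $g$ be multiplicative functions with $|f(n)|,|g(n)|\le1$ for all $n$, and let $h$ be defined by $g=f*h$. Suppose $\mathbb{D}_\beta(f,g)<\infty$ for some $\beta>0$, and let $\sigma>1/2$ with $\sigma\ge\beta$. Then the series $\sum_{n=1}^\infty\frac{|h(n)|^2}{n^\sigma}$ converges if the quantity $H(\sigma)$ is finite.
   Context: $(f*h)(n)=\sum_{dm=n}f(d)h(m)$. $\mathbb{D}_\beta(f,g)^2:=\sum_p \frac{1-\Re(f(p)\overline{g(p)})}{p^\beta}$ (sum over primes). $H(\sigma):=\sum_{p\le 4^{1/\sigma}}\sum_{k=0}^\infty \frac{|h(p^k)|^2}{p^{k\sigma}}$. *)

theory Defs
  imports "HOL-Analysis.Analysis" "HOL-Computational_Algebra.Primes"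
begin

text \<open>Multiplicative arithmetic function (values at 0 are irrelevant).\<close>
definition multiplicative :: "(nat \<Rightarrow> complex) \<Rightarrow> bool" where
  "multiplicative f \<longleftrightarrow> f 1 = 1 \<and> (\<forall>m n. m > 0 \<longrightarrow> n > 0 \<longrightarrow> coprime m n \<longrightarrow> f (m * n) = f m * f n)"

definition dirichlet_conv :: "(nat \<Rightarrow> complex) \<Rightarrow> (nat \<Rightarrow> complex) \<Rightarrow> nat \<Rightarrow> complex" where
  "dirichlet_conv f h n = (\<Sum>d | d dvd n. f d * h (n div d))"

text \<open>D_beta(f,g)^2 < infinity: the prime series converges (terms are nonnegative).\<close>
definition D_finite :: "real \<Rightarrow> (nat \<Rightarrow> complex) \<Rightarrow> (nat \<Rightarrow> complex) \<Rightarrow> bool" where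
  "D_finite \<beta> f g \<longleftrightarrow>
     (\<lambda>p. (1 - Re (f p * cnj (g p))) / real p powr \<beta>) summable_on {p. prime p}"

text \<open>H(sigma) < infinity: each of the finitely many inner series over k converges.\<close>
definition H_finite :: "(nat \<Rightarrow> complex) \<Rightarrow> real \<Rightarrow> bool" where
  "H_finite h \<sigma> \<longleftrightarrow>
     (\<forall>p. prime p \<and> real p \<le> 4 powr (1 / \<sigma>) \<longrightarrow>
        summable (\<lambda>k. (cmod (h (p ^ k)))\<^sup>2 / real p powr (real k * \<sigma>)))"

end

theory Submission
  imports Defs
begin


lemma divisors_primepow:
  fixes p :: nat assumes "prime p"
  shows "{d. d dvd p ^ k} = (\<lambda>j. p ^ j) ` {..k}"
  using divides_primepow_nat[OF assms] by auto

lemma conv_primepow: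
  fixes p :: nat assumes "prime p"
  shows "dirichlet_conv f h (p ^ k) = (\<Sum>j\<le>k. f (p ^ j) * h (p ^ (k - j)))"
proof -
  have inj: "inj_on (\<lambda>j. p ^ j) {..k}"
  proof -
    have "1 < p" using assms prime_gt_1_nat by blast
    then show ?thesis by (auto simp: inj_on_def)
  qed
  have "dirichlet_conv f h (p ^ k) = (\<Sum>d\<in>(\<lambda>j. p ^ j) ` {..k}. f d * h (p ^ k div d))"
    unfolding dirichlet_conv_def divisors_primepow[OF assms] ..
  also have "\<dots> = (\<Sum>j\<le>k. f (p ^ j) * h (p ^ k div p ^ j))"
    by (subst sum.reindex[OF inj]) simp
  also have "\<dots> = (\<Sum>j\<le>k. f (p ^ j) * h (p ^ (k - j)))"
    using assms by (intro sum.cong refl) (simp add: power_diff prime_gt_0_nat)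
  finally show ?thesis .
qed

lemma h_one:
  assumes "multiplicative f" "multiplicative g" "\<And>n. n > 0 \<Longrightarrow> g n = dirichlet_conv f h n"
  shows "h 1 = 1"
proof -
  have "g 1 = dirichlet_conv f h 1" using assms(3) by simp
  also have "\<dots> = f 1 * h 1" by (simp add: dirichlet_conv_def)
  finally show ?thesis using assms(1,2) by (simp add: multiplicative_def)
qed

lemma h_primepow_bound:
  assumes "multiplicative f" "multiplicative g"
    and "\<And>n. n > 0 \<Longrightarrow> cmod (f n) \<le> 1" and "\<And>n. n > 0 \<Longrightarrow> cmod (g n) \<le> 1"
    and "\<And>n. n > 0 \<Longrightarrow> g n = dirichlet_conv f h n" and p: "prime p"
  shows "cmod (h (p ^ k)) \<le> 2 ^ k"
proof (induction k rule: less_induct)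
  case (less k)
  have pp: "\<And>j. p ^ j > 0" using p prime_gt_0_nat by simp
  have f1: "f 1 = 1" using assms(1) by (simp add: multiplicative_def)
  have "g (p ^ k) = (\<Sum>j\<le>k. f (p ^ j) * h (p ^ (k - j)))"
    using assms(5)[OF pp] conv_primepow[OF p] by simp
  also have "\<dots> = f (p ^ 0) * h (p ^ (k - 0)) + (\<Sum>j\<in>{1..k}. f (p ^ j) * h (p ^ (k - j)))"
  proof -
    have "{..k} = insert 0 {1..k}" by auto
    then show ?thesis by (simp del: insert_iff)
  qed
  finally have eq: "h (p ^ k) = g (p ^ k) - (\<Sum>j\<in>{1..k}. f (p ^ j) * h (p ^ (k - j)))"
    using f1 by simp
  have "cmod (h (p ^ k)) \<le> cmod (g (p ^ k)) + (\<Sum>j\<in>{1..k}. cmod (f (p ^ j) * h (p ^ (k - j))))"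
    unfolding eq by (rule order_trans[OF norm_triangle_ineq4]) (simp add: sum_norm_le)
  also have "\<dots> \<le> 1 + (\<Sum>j\<in>{1..k}. 2 ^ (k - j))"
  proof (intro add_mono sum_mono)
    show "cmod (g (p ^ k)) \<le> 1" using assms(4)[OF pp] .
  next
    fix j assume j: "j \<in> {1..k}"
    have "cmod (f (p ^ j) * h (p ^ (k - j))) = cmod (f (p ^ j)) * cmod (h (p ^ (k - j)))"
      by (simp add: norm_mult)
    also have "\<dots> \<le> 1 * 2 ^ (k - j)"
      using j by (intro mult_mono assms(3)[OF pp] less) auto
    finally show "cmod (f (p ^ j) * h (p ^ (k - j))) \<le> 2 ^ (k - j)" by simp
  qed
  also have "(\<Sum>j\<in>{1..k}. (2::real) ^ (k - j)) = (\<Sum>i<k. 2 ^ i)"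
  proof (rule sum.reindex_bij_witness[where i="\<lambda>i. k - i" and j="\<lambda>j. k - j"]) 
  qed auto
  also have "(\<Sum>i<k. (2::real) ^ i) = 2 ^ k - 1"
    by (induction k) auto
  finally show ?case by simp
qed



lemma divisors_coprime:
  fixes m n :: nat assumes "coprime m n"
  shows "{d. d dvd m * n} = (\<lambda>(a,b). a * b) ` ({a. a dvd m} \<times> {b. b dvd n})"
proof (intro equalityI subsetI)
  fix d assume "d \<in> {d. d dvd m * n}"
  then have d: "d dvd m * n" by simp
  have "d = gcd d m * gcd d n"
    by (smt (verit, ccfv_SIG) assms coprime_commute coprime_mult_right_iff d
    division_decomp dvd_def gcd_mult_left_left_cancel
    gcd_mult_left_right_cancel gcd_nat.order_iff)
  then show "d \<in> (\<lambda>(a,b). a * b) ` ({a. a dvd m} \<times> {b. b dvd n})" by force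
qed (auto intro: mult_dvd_mono)

lemma divisors_coprime_inj:
  fixes m n :: nat assumes "coprime m n" "m > 0"
  shows "inj_on (\<lambda>(a,b). a * b) ({a. a dvd m} \<times> {b. b dvd n})"
proof (intro inj_onI, clarify)
  fix a b a' b' :: nat assume *: "a dvd m" "b dvd n" "a' dvd m" "b' dvd n" "a * b = a' * b'"
  have "a = gcd (a * b) m" 
    by (metis "*"(1,2) assms(1) coprime_divisors gcd_mult_left_right_cancel gcd_nat.refl gcd_proj1_if_dvd_nat)
  moreover have "a' = gcd (a' * b') m" 
    by (metis "*"(3,4) assms(1) coprime_divisors gcd_mult_left_right_cancel gcd_nat.absorb1 gcd_nat.order_iff_strict)
  ultimately have aa: "a = a'" using *(5) by metis
  have "a > 0" using *(1) assms(2) by (auto intro: dvd_pos_nat)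
  then have "b = b'" using *(5) aa by simp
  then show "a = a' \<and> b = b'" using aa by simp
qed

lemma h_mult:
  assumes f: "multiplicative f" and g: "multiplicative g"
    and conv: "\<And>n. n > 0 \<Longrightarrow> g n = dirichlet_conv f h n"
  shows "m > 0 \<Longrightarrow> n > 0 \<Longrightarrow> coprime m n \<Longrightarrow> h (m * n) = h m * h n"
proof (induction "m * n" arbitrary: m n rule: less_induct)
  case (less m n)
  define D where "D = {a. a dvd m} \<times> {b. b dvd n}"
  have finD: "finite D" unfolding D_def using less.prems by auto
  have f1: "f 1 = 1" using f by (simp add: multiplicative_def)
  have fm: "\<And>a b. a > 0 \<Longrightarrow> b > 0 \<Longrightarrow> coprime a b \<Longrightarrow> f (a * b) = f a * f b"
    using f by (simp add: multiplicative_def)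
  have cop: "\<And>a b. (a, b) \<in> D \<Longrightarrow> coprime a b"
    using less.prems(3) unfolding D_def by (auto intro: coprime_divisors)
  have pos: "\<And>a b. (a, b) \<in> D \<Longrightarrow> a > 0 \<and> b > 0"
    using less.prems(1,2) unfolding D_def by (auto intro: dvd_pos_nat)
  define X where "X = (\<lambda>(a, b). f a * f b * h ((m div a) * (n div b)))"
  define Y where "Y = (\<lambda>(a, b). f a * f b * (h (m div a) * h (n div b)))"
  have "g (m * n) = (\<Sum>d\<in>(\<lambda>(a,b). a * b) ` D. f d * h (m * n div d))"
    using conv[of "m * n"] less.prems unfolding dirichlet_conv_def D_def
    by (simp add: divisors_coprime)
  also have "\<dots> = (\<Sum>(a,b)\<in>D. f (a * b) * h (m * n div (a * b)))"
    using divisors_coprime_inj[OF less.prems(3,1)] unfolding D_def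
    by (subst sum.reindex) (auto simp: case_prod_unfold)
  also have "\<dots> = sum X D"
  proof (intro sum.cong refl, clarify)
    fix a b assume ab: "(a, b) \<in> D"
    then have "a dvd m" "b dvd n" unfolding D_def by auto
    then have "m * n div (a * b) = (m div a) * (n div b)"
      by (metis div_mult_div_if_dvd)
    then show "f (a * b) * h (m * n div (a * b)) = X (a, b)"
      unfolding X_def using fm[OF _ _ cop[OF ab]] pos[OF ab] by simp
  qed
  finally have gX: "g (m * n) = sum X D" .
  have "g (m * n) = g m * g n" using g less.prems by (simp add: multiplicative_def)
  also have "\<dots> = (\<Sum>a | a dvd m. f a * h (m div a)) * (\<Sum>b | b dvd n. f b * h (n div b))"
    using conv less.prems by (simp add: dirichlet_conv_def)
  also have "\<dots> = sum Y D"
    unfolding sum_product D_def Y_def sum.cartesian_product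
    by (intro sum.cong refl) (auto simp: algebra_simps)
  finally have gY: "g (m * n) = sum Y D" .
  have one: "(1, 1) \<in> D" unfolding D_def by auto
  have "sum X (D - {(1,1)}) = sum Y (D - {(1,1)})"
  proof (intro sum.cong refl)
    fix x assume x: "x \<in> D - {(1,1)}"
    obtain a b where xab: "x = (a, b)" by (cases x)
    have ab: "(a, b) \<in> D" "(a, b) \<noteq> (1, 1)" using x xab by auto
    then have dv: "a dvd m" "b dvd n" unfolding D_def by auto
    have mpos: "m div a > 0" "n div b > 0" using dv less.prems(1,2)
      by (auto simp: dvd_div_eq_0_iff)
    have "m div a \<le> m" "n div b \<le> n" by auto
    moreover have "m div a < m \<or> n div b < n"
    proof -
      have "a > 1 \<or> b > 1" using ab(2) pos[OF ab(1)] by auto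
      then show ?thesis using less.prems(1,2) by (auto intro: div_less_dividend)
    qed
    ultimately have lt: "(m div a) * (n div b) < m * n"
      using mpos by (auto intro: mult_less_le_imp_less mult_le_less_imp_less)
    have "m div a dvd m" using dv(1) by (metis dvd_mult_div_cancel dvd_triv_right)
    moreover have "n div b dvd n" using dv(2) by (metis dvd_mult_div_cancel dvd_triv_right)
    ultimately have "coprime (m div a) (n div b)"
      using less.prems(3) by (rule coprime_divisors)
    then show "X x = Y x" unfolding xab
      unfolding X_def Y_def using less.hyps[OF lt mpos] by simp
  qed
  moreover have "sum X D = X (1,1) + sum X (D - {(1,1)})"
    using finD one by (simp add: sum.remove)
  moreover have "sum Y D = Y (1,1) + sum Y (D - {(1,1)})"
    using finD one by (simp add: sum.remove)
  ultimately have "X (1,1) = Y (1,1)" using gX gY by simp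
  then show ?case unfolding X_def Y_def using f1 by simp
qed


lemma euler_bound:
  fixes a :: "nat \<Rightarrow> real"
  assumes nonneg: "\<And>n. a n \<ge> 0" and a1: "a 1 = 1"
    and am: "\<And>m n. m > 0 \<Longrightarrow> n > 0 \<Longrightarrow> coprime m n \<Longrightarrow> a (m * n) = a m * a n"
  shows "finite P \<Longrightarrow> (\<forall>p\<in>P. prime p) \<Longrightarrow>
    (\<Sum>n\<in>{n. 0 < n \<and> n \<le> N \<and> prime_factors n \<subseteq> P}. a n) \<le> (\<Prod>p\<in>P. \<Sum>k\<le>N. a (p ^ k))"
proof (induction P rule: finite_induct)
  case empty
  have "{n. 0 < n \<and> n \<le> N \<and> prime_factors n \<subseteq> {}} \<subseteq> {1}"
    by (auto simp: prime_factorization_empty_iff)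
  then have "(\<Sum>n\<in>{n. 0 < n \<and> n \<le> N \<and> prime_factors n \<subseteq> {}}. a n) \<le> (\<Sum>n\<in>{1}. a n)"
    by (intro sum_mono2) (auto simp: nonneg)
  then show ?case using a1 by simp
next
  case (insert q P)
  define S where "S = (\<lambda>Q. {n. 0 < n \<and> n \<le> N \<and> prime_factors n \<subseteq> Q})"
  have finS: "\<And>Q. finite (S Q)" unfolding S_def by (rule finite_subset[of _ "{..N}"]) auto
  have q: "prime q" using insert.prems by simp
  have q1: "q > 1" using q prime_gt_1_nat by blast
  define D where "D = {..N} \<times> S P"
  define G where "G = (\<lambda>(k, m). q ^ k * m)"
  have sub: "S (insert q P) \<subseteq> G ` D"
  proof
    fix n assume n: "n \<in> S (insert q P)"
    define k where "k = multiplicity q n"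
    define m where "m = n div q ^ k"
    have nqm: "n = q ^ k * m" unfolding m_def k_def using multiplicity_dvd[of q n] by simp
    have npos: "n > 0" "n \<le> N" using n unfolding S_def by auto
    have mpos: "m > 0" using nqm npos by (cases m) auto
    have mle: "m \<le> n" using nqm q1 by simp
    have ndq: "\<not> q dvd m" unfolding m_def k_def by (rule multiplicity_decompose) (use npos q1 in auto)
    have "prime_factors m \<subseteq> P"
    proof
      fix r assume r: "r \<in> prime_factors m"
      then have "r dvd n" using nqm by (auto simp: in_prime_factors_iff)
      then have "r \<in> prime_factors n" using r npos by (auto simp: in_prime_factors_iff)
      then have "r \<in> insert q P" using n unfolding S_def by auto
      moreover have "r \<noteq> q" using r ndq by (auto simp: in_prime_factors_iff)
      ultimately show "r \<in> P" by simp
    qed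
    then have mS: "m \<in> S P" using mpos mle npos unfolding S_def by auto
    have "k < 2 ^ k" by (rule less_exp)
    also have "(2::nat) ^ k \<le> q ^ k" using q1 by (intro power_mono) auto
    also have "q ^ k \<le> n" using nqm mpos by simp
    finally have "k \<le> N" using npos by simp
    then show "n \<in> G ` D" unfolding G_def D_def using mS nqm by force
  qed
  have "(\<Sum>n\<in>S (insert q P). a n) \<le> (\<Sum>n\<in>G ` D. a n)"
    by (intro sum_mono2 sub) (auto simp: D_def finS nonneg)
  also have "\<dots> \<le> sum (a \<circ> G) D"
    by (intro sum_image_le) (auto simp: D_def finS nonneg)
  also have "\<dots> = (\<Sum>(k, m)\<in>D. a (q ^ k) * a m)"
  proof (intro sum.cong refl, clarify)
    fix k m assume km: "(k, m) \<in> D"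
    then have m: "m > 0" "prime_factors m \<subseteq> P" unfolding D_def S_def by auto
    have "\<not> q dvd m"
    proof
      assume "q dvd m"
      then have "q \<in> prime_factors m" using q m(1) by (auto simp: in_prime_factors_iff)
      then show False using m(2) insert.hyps(2) by auto
    qed
    then have "coprime q m" using q by (simp add: prime_imp_coprime)
    then have "coprime (q ^ k) m" by simp
    then show "(a \<circ> G) (k, m) = a (q ^ k) * a m"
      unfolding G_def using am[of "q ^ k" m] m(1) q1 by simp
  qed
  also have "\<dots> = (\<Sum>k\<le>N. a (q ^ k)) * (\<Sum>m\<in>S P. a m)"
    unfolding D_def sum_product sum.cartesian_product by simp
  also have "\<dots> \<le> (\<Sum>k\<le>N. a (q ^ k)) * (\<Prod>p\<in>P. \<Sum>k\<le>N. a (p ^ k))"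
    using insert.IH insert.prems unfolding S_def
    by (intro mult_left_mono) (auto intro: sum_nonneg nonneg)
  also have "\<dots> = (\<Prod>p\<in>insert q P. \<Sum>k\<le>N. a (p ^ k))"
    using insert.hyps by simp
  finally show ?case unfolding S_def .
qed


lemma powpow: "p > 0 \<Longrightarrow> real (p ^ k) powr (\<sigma>::real) = (real p powr \<sigma>) ^ k"
  by (simp add: powr_realpow[symmetric] powr_powr mult.commute flip: powr_power)

lemma powpow2: "p > 0 \<Longrightarrow> real p powr (real k * \<sigma>) = (real p powr \<sigma>) ^ k"
  by (simp add: powr_realpow[symmetric] powr_powr mult.commute)

lemma Re_le1: "cmod z \<le> 1 \<Longrightarrow> cmod w \<le> 1 \<Longrightarrow> Re (z * cnj w) \<le> 1"
proof -
  assume a: "cmod z \<le> 1" "cmod w \<le> 1"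
  have "Re (z * cnj w) \<le> cmod (z * cnj w)" by (rule complex_Re_le_cmod)
  also have "\<dots> = cmod z * cmod w" by (simp add: norm_mult)
  also have "\<dots> \<le> 1 * 1" using a by (intro mult_mono) auto
  finally show ?thesis by simp
qed

lemma diff_sq: "cmod z \<le> 1 \<Longrightarrow> cmod w \<le> 1 \<Longrightarrow> (cmod (w - z))\<^sup>2 \<le> 2 * (1 - Re (z * cnj w))"
proof -
  assume a: "cmod z \<le> 1" "cmod w \<le> 1"
  have e: "(cmod (w - z))\<^sup>2 = (cmod w)\<^sup>2 + (cmod z)\<^sup>2 - 2 * Re (z * cnj w)"
    unfolding cmod_power2 by (simp add: power2_eq_square algebra_simps)
  have "(cmod w)\<^sup>2 \<le> 1" "(cmod z)\<^sup>2 \<le> 1" using a by (auto simp: power_le_one abs_le_iff)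
  then show ?thesis unfolding e by simp
qed


theorem lemma1:
  fixes f g h :: "nat \<Rightarrow> complex" and \<beta> \<sigma> :: real
  assumes "multiplicative f" and "multiplicative g"
    and "\<And>n. n > 0 \<Longrightarrow> cmod (f n) \<le> 1" and "\<And>n. n > 0 \<Longrightarrow> cmod (g n) \<le> 1"
    and "\<And>n. n > 0 \<Longrightarrow> g n = dirichlet_conv f h n"
    and "\<beta> > 0" and "D_finite \<beta> f g"
    and "\<sigma> > 1/2" and "\<sigma> \<ge> \<beta>"
    and "H_finite h \<sigma>"
  shows "(\<lambda>n. (cmod (h n))\<^sup>2 / real n powr \<sigma>) summable_on {1..}"
proof -
  define a where "a = (\<lambda>n. (cmod (h n))\<^sup>2 / real n powr \<sigma>)"
  have anonneg: "\<And>n. a n \<ge> 0" unfolding a_def by simp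
  have a1: "a 1 = 1" unfolding a_def using h_one[OF assms(1,2,5)] by simp
  have amult: "\<And>m n. m > 0 \<Longrightarrow> n > 0 \<Longrightarrow> coprime m n \<Longrightarrow> a (m * n) = a m * a n"
    unfolding a_def using h_mult[OF assms(1,2,5)] by (simp add: norm_mult power_mult_distrib powr_mult)
  have spos: "\<sigma> > 0" using assms(8) by simp
  define c where "c = 4 powr (1 / \<sigma>)"
  define r where "r = (\<lambda>p::nat. 4 / real p powr \<sigma>)"
  define Dt where "Dt = (\<lambda>p::nat. (1 - Re (f p * cnj (g p))) / real p powr \<beta>)"
  define U where "U = (\<lambda>p. if real p \<le> c then (\<Sum>k. a (p ^ k)) else 2 * Dt p + (r p)\<^sup>2 / (1 - r p))"
  have large: "0 < r p \<and> r p < 1" if p: "prime p" "real p > c" for p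
  proof -
    have "c powr \<sigma> = 4" unfolding c_def using spos by (simp add: powr_powr)
    moreover have "c powr \<sigma> < real p powr \<sigma>"
      using p spos unfolding c_def by (intro powr_less_mono2) auto
    ultimately have "4 < real p powr \<sigma>" by simp
    moreover have "p > 0" using p(1) prime_gt_0_nat by blast
    ultimately show ?thesis unfolding r_def by (simp add: divide_less_eq)
  qed
  have apk: "a (p ^ k) \<le> (r p) ^ k" if p: "prime p" for p k
  proof -
    have pp: "p > 0" using p prime_gt_0_nat by blast
    have hb: "cmod (h (p ^ k)) \<le> 2 ^ k" by (rule h_primepow_bound[OF assms(1-5) p])
    have "(cmod (h (p ^ k)))\<^sup>2 \<le> (2 ^ k)\<^sup>2" using hb by (intro power_mono) auto
    also have "((2::real) ^ k)\<^sup>2 = (2\<^sup>2) ^ k" by (metis power_mult mult.commute)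
    also have "((2::real)\<^sup>2) ^ k = 4 ^ k" by simp
    finally have num: "(cmod (h (p ^ k)))\<^sup>2 \<le> 4 ^ k" .
    have "a (p ^ k) = (cmod (h (p ^ k)))\<^sup>2 / (real p powr \<sigma>) ^ k"
      unfolding a_def powpow[OF pp] ..
    also have "\<dots> \<le> 4 ^ k / (real p powr \<sigma>) ^ k"
      using num pp by (intro divide_right_mono) auto
    also have "\<dots> = (r p) ^ k" unfolding r_def by (simp add: power_divide)
    finally show ?thesis .
  qed
  have hp: "h p = g p - f p" if p: "prime p" for p
  proof -
    have pp: "p > 0" using p prime_gt_0_nat by blast
    have "g (p ^ 1) = (\<Sum>j\<le>1. f (p ^ j) * h (p ^ (1 - j)))"
      using assms(5)[of "p ^ 1"] pp conv_primepow[OF p, of f h 1] by simp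
    then have "g p = f 1 * h p + f p * h 1" by simp
    then show ?thesis using h_one[OF assms(1,2,5)] assms(1) by (simp add: multiplicative_def)
  qed
  have Dt_nonneg: "Dt p \<ge> 0" if "p > 0" for p
    unfolding Dt_def using Re_le1[OF assms(3)[OF that] assms(4)[OF that]] by simp
  have ap: "a p \<le> 2 * Dt p" if p: "prime p" for p
  proof -
    have pp: "p > 0" using p prime_gt_0_nat by blast
    have p1: "real p \<ge> 1" using pp by simp
    have num: "(cmod (h p))\<^sup>2 \<le> 2 * (1 - Re (f p * cnj (g p)))"
      unfolding hp[OF p] by (rule diff_sq[OF assms(3)[OF pp] assms(4)[OF pp]])
    have nn: "0 \<le> 2 * (1 - Re (f p * cnj (g p)))" using Dt_nonneg[OF pp] pp unfolding Dt_def
      by (simp add: divide_nonneg_pos zero_le_divide_iff)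
    have "a p \<le> 2 * (1 - Re (f p * cnj (g p))) / real p powr \<sigma>"
      unfolding a_def using num pp by (intro divide_right_mono) auto
    also have "\<dots> \<le> 2 * (1 - Re (f p * cnj (g p))) / real p powr \<beta>"
      using nn pp p1 assms(9) by (intro divide_left_mono powr_mono mult_pos_pos) auto
    finally show ?thesis unfolding Dt_def by simp
  qed
  have Hs: "summable (\<lambda>k. a (p ^ k))" if p: "prime p" "real p \<le> c" for p
  proof -
    have pp: "p > 0" using p prime_gt_0_nat by blast
    have "summable (\<lambda>k. (cmod (h (p ^ k)))\<^sup>2 / real p powr (real k * \<sigma>))"
      using assms(10) p unfolding H_finite_def c_def by blast
    moreover have "(\<lambda>k. (cmod (h (p ^ k)))\<^sup>2 / real p powr (real k * \<sigma>)) = (\<lambda>k. a (p ^ k))"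
      unfolding a_def powpow[OF pp] powpow2[OF pp] ..
    ultimately show ?thesis by simp
  qed
  have U_nonneg: "U p \<ge> 0" if p: "prime p" for p
  proof (cases "real p \<le> c")
    case True
    then show ?thesis unfolding U_def using suminf_nonneg[OF Hs[OF p True] anonneg] by simp
  next
    case False
    then have "0 < r p \<and> r p < 1" using large p by simp
    moreover have "Dt p \<ge> 0" using Dt_nonneg p prime_gt_0_nat by blast
    ultimately show ?thesis unfolding U_def using False by simp
  qed
  have local: "(\<Sum>k\<le>K. a (p ^ k)) \<le> 1 + U p" if p: "prime p" for p K
  proof (cases "real p \<le> c")
    case True
    have "(\<Sum>k\<le>K. a (p ^ k)) \<le> (\<Sum>k. a (p ^ k))"
      by (rule sum_le_suminf[OF Hs[OF p True]]) (auto simp: anonneg)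
    then show ?thesis unfolding U_def using True by simp
  next
    case False
    then have r: "0 < r p" "r p < 1" using large p by auto
    define b where "b = (\<lambda>k. if k = 0 then 1 else if k = 1 then a p else r p ^ k)"
    have bnn: "b k \<ge> 0" for k unfolding b_def using r anonneg by simp
    have sb: "summable b"
    proof (rule summable_comparison_test'[where N=2])
      show "summable (\<lambda>k. r p ^ k)" using r by (intro summable_geometric) simp
      fix n :: nat assume "n \<ge> 2" then show "norm (b n) \<le> r p ^ n" unfolding b_def using r by simp
    qed
    have "(\<Sum>k\<le>K. a (p ^ k)) \<le> (\<Sum>k\<le>K. b k)"
    proof (intro sum_mono)
      fix k show "a (p ^ k) \<le> b k" unfolding b_def using a1 apk[OF p, of k] by auto
    qed
    also have "\<dots> \<le> suminf b" by (rule sum_le_suminf[OF sb]) (auto simp: bnn)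
    also have "suminf b = (\<Sum>n. b (n + 2)) + (\<Sum>i<2. b i)" by (rule suminf_split_initial_segment[OF sb])
    also have "(\<lambda>n. b (n + 2)) = (\<lambda>n. (r p)\<^sup>2 * r p ^ n)" unfolding b_def by (simp add: power_add power2_eq_square algebra_simps)
    also have "(\<Sum>n. (r p)\<^sup>2 * r p ^ n) = (r p)\<^sup>2 / (1 - r p)"
      using r by (simp add: suminf_mult suminf_geometric divide_inverse)
    also have "(\<Sum>i<2. b i) = 1 + a p" unfolding b_def by (simp add: numeral_2_eq_2)
    finally show ?thesis unfolding U_def using False ap[OF p] by simp
  qed
  define u where "u = (\<lambda>n. if prime n then U n else 0)"
  have u_nonneg: "u n \<ge> 0" for n unfolding u_def using U_nonneg by simp
  have u_summable: "summable u"
  proof -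
    define u1 where "u1 = (\<lambda>n. if prime n \<and> real n \<le> c then U n else 0)"
    define Dp where "Dp = (\<lambda>n. if prime n then Dt n else 0)"
    define u3 where "u3 = (\<lambda>n. if prime n \<and> real n > c then (r n)\<^sup>2 / (1 - r n) else 0)"
    have s1: "summable u1"
    proof (rule summable_finite[of "{..nat \<lceil>c\<rceil>}"])
      fix n assume "n \<notin> {..nat \<lceil>c\<rceil>}"
      then have "real (nat \<lceil>c\<rceil>) < real n" by simp
      moreover have "c \<le> real (nat \<lceil>c\<rceil>)" by (rule real_nat_ceiling_ge)
      ultimately have "real n > c" by linarith
      then show "u1 n = 0" unfolding u1_def by simp
    qed simp
    have Dnn: "Dp n \<ge> 0" for n unfolding Dp_def using Dt_nonneg prime_gt_0_nat by auto
    have s2: "summable Dp"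
    proof -
      have "Dt summable_on {p. prime p}" using assms(7) unfolding D_finite_def Dt_def .
      moreover have "Dp summable_on UNIV \<longleftrightarrow> Dt summable_on {p. prime p}"
        by (rule summable_on_cong_neutral) (auto simp: Dp_def)
      ultimately have "Dp summable_on UNIV" by simp
      then show ?thesis using summable_on_UNIV_nonneg_real_iff Dnn by blast
    qed
    have s3: "summable u3"
    proof (rule summable_comparison_test'[where N="nat \<lceil>8 powr (1/\<sigma>)\<rceil>"])
      show "summable (\<lambda>n. 32 * real n powr (-2*\<sigma>))"
        using assms(8) by (intro summable_mult) (simp add: summable_real_powr_iff)
      fix n :: nat assume n: "n \<ge> nat \<lceil>8 powr (1/\<sigma>)\<rceil>"
      show "norm (u3 n) \<le> 32 * real n powr (-2*\<sigma>)"
      proof (cases "prime n \<and> real n > c")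
        case False
        then have "u3 n = 0" unfolding u3_def by auto
        then show ?thesis by simp
      next
        case True
        have rr: "0 < r n" "r n < 1" using large True by auto
        have npos: "real n > 0" using True prime_gt_0_nat by auto
        have "real (nat \<lceil>8 powr (1/\<sigma>)\<rceil>) \<le> real n" using n by (simp only: of_nat_le_iff)
        moreover have "8 powr (1/\<sigma>) \<le> real (nat \<lceil>8 powr (1/\<sigma>)\<rceil>)" by (rule real_nat_ceiling_ge)
        ultimately have "real n \<ge> 8 powr (1/\<sigma>)" by linarith
        then have "real n powr \<sigma> \<ge> (8 powr (1/\<sigma>)) powr \<sigma>" using spos by (intro powr_mono2) auto
        then have n8: "real n powr \<sigma> \<ge> 8" using spos by (simp add: powr_powr)
        then have "r n \<le> 1/2" unfolding r_def by (simp add: divide_le_eq)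
        then have "1 - r n \<ge> 1/2" by simp
        then have "(r n)\<^sup>2 / (1 - r n) \<le> (r n)\<^sup>2 / (1/2)"
          by (intro divide_left_mono) (use rr in auto)
        then have le: "(r n)\<^sup>2 / (1 - r n) \<le> 2 * (r n)\<^sup>2" by simp
        have "(real n powr \<sigma>)\<^sup>2 = real n powr (2 * \<sigma>)"
          by (simp add: power2_eq_square powr_add[symmetric])
        then have r2: "(r n)\<^sup>2 = 16 * real n powr (-2*\<sigma>)"
          unfolding r_def by (simp add: power_divide powr_minus divide_inverse power_inverse)
        have "(r n)\<^sup>2 / (1 - r n) \<le> 32 * real n powr (-2*\<sigma>)" using le unfolding r2 by simp
        moreover have "(r n)\<^sup>2 / (1 - r n) \<ge> 0" using rr by simp
        ultimately show ?thesis unfolding u3_def using True rr by simp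
      qed
    qed
    show ?thesis
    proof (rule summable_comparison_test[OF _ summable_add[OF summable_add[OF s1 summable_mult[OF s2, of 2]] s3]])
      show "\<exists>N. \<forall>n\<ge>N. norm (u n) \<le> u1 n + 2 * Dp n + u3 n"
      proof (intro exI allI impI)
        fix n :: nat
        have u3nn: "u3 n \<ge> 0" unfolding u3_def using large by (auto intro: divide_nonneg_pos)
        have u1nn: "u1 n \<ge> 0" unfolding u1_def using U_nonneg by simp
        show "norm (u n) \<le> u1 n + 2 * Dp n + u3 n"
        proof (cases "prime n")
          case False then show ?thesis unfolding u_def using u1nn u3nn Dnn[of n] by simp
        next
          case True
          show ?thesis
          proof (cases "real n \<le> c")
            case True2: True
            then show ?thesis unfolding u_def u1_def using True U_nonneg[OF True] u3nn Dnn[of n] by simp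
          next
            case False2: False
            then have "u n = 2 * Dp n + u3 n" unfolding u_def u3_def Dp_def U_def
              using True by simp
            moreover have "u1 n = 0" unfolding u1_def using False2 by simp
            ultimately show ?thesis using u_nonneg[of n] by simp
          qed
        qed
      qed
    qed
  qed
  define T where "T = suminf u"
  have bound: "sum a F \<le> exp T" if F: "finite F" "F \<subseteq> {1..}" for F
  proof -
    define N where "N = Max (insert 0 F)"
    define P where "P = {p. prime p \<and> p \<le> N}"
    define S where "S = {n. 0 < n \<and> n \<le> N \<and> prime_factors n \<subseteq> P}"
    have finP: "finite P" unfolding P_def by (rule finite_subset[of _ "{..N}"]) auto
    have FS: "F \<subseteq> S"
    proof
      fix n assume n: "n \<in> F"
      have nN: "n \<le> N" unfolding N_def using F n by simp
      have "n > 0" using n F by auto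
      moreover have "prime_factors n \<subseteq> P"
      proof
        fix q assume q: "q \<in> prime_factors n"
        then have "q \<le> n" using \<open>n > 0\<close> by (auto simp: in_prime_factors_iff intro: dvd_imp_le)
        then show "q \<in> P" using q nN unfolding P_def by (auto simp: in_prime_factors_iff)
      qed
      ultimately show "n \<in> S" unfolding S_def using nN by auto
    qed
    have "sum a F \<le> sum a S"
      by (intro sum_mono2 FS) (auto simp: S_def anonneg intro: finite_subset[of _ "{..N}"])
    also have "\<dots> \<le> (\<Prod>p\<in>P. \<Sum>k\<le>N. a (p ^ k))"
      unfolding S_def by (rule euler_bound[OF anonneg a1 amult finP]) (auto simp: P_def)
    also have "\<dots> \<le> (\<Prod>p\<in>P. 1 + U p)"
      by (intro prod_mono conjI sum_nonneg anonneg local) (auto simp: P_def)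
    also have "\<dots> \<le> exp (sum U P)"
      by (intro prod_le_exp_sum U_nonneg) (auto simp: P_def)
    also have "sum U P = sum u P" unfolding u_def P_def by (intro sum.cong) auto
    also have "sum u P \<le> T" unfolding T_def
      by (rule sum_le_suminf[OF u_summable finP]) (auto simp: u_nonneg)
    finally show ?thesis by simp
  qed
  have "a summable_on {1..}"
  proof (rule nonneg_bdd_above_summable_on)
    show "bdd_above (sum a ` {F. F \<subseteq> {1..} \<and> finite F})"
      by (rule bdd_aboveI2[where M="exp T"]) (use bound in auto)
  qed (simp add: anonneg)
  then show ?thesis unfolding a_def .
qed

end
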